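(* In the setting below, in $\gamma$-normal coordinates $x^i$ centered at $i$, the vector field $J^i=-4|\det\gamma|^{-1/2}\gamma^{ij}(J^1_j-J^3_j)$ has the form $$J^i=H_1^i+\frac{1}{r^3}\left(r^2H_2^i+x^iH\right),$$ where $H_1^i,H_2^i,H$ are real-analytic functions of $x$ near $i$.
   Context: Let $(\tilde M,\tilde g)$ be a stationary vacuum space-time with metric $\tilde g=\lambda(dt+\beta_i d\tilde x^i)^2-\lambda^{-1}\tilde\gamma_{ij}d\tilde x^i d\tilde x^j$, fields $\lambda>0,\beta_i,\tilde\gamma_{ij}$ living on the quotient manifold $\tilde X$ of trajectories of the Killing vector $\xi=\partial_t$, twist potential $\omega$ with $\tilde D_i\omega=-\lambda^2\tilde\epsilon_{ijk}\tilde D^j\beta^k$, and Hansen potentials $\tilde\phi_M=(\lambda^2+\omega^2-1)/(4\lambda)$, $\tilde\phi_S=\omega/(2\lambda)$, $\tilde\phi_K=(\lambda^2+\omega^2+1)/(4\lambda)$. Asymptotic flatness: there is $X=\tilde X\cup\{i\}$ such that with $\Omega=\tfrac12B^{-2}[(1+4(\tilde\phi_M^2+\tilde\phi_S^2))^{1/2}-1]$ ($B>0$ constant), $\Omega\in C^{2,\alpha}(X)$, $\Omega(i)=0$, $D\Omega(i)=0$, $\gamma_{ij}=\Omega^2\tilde\gamma_{ij}$ extends to a $C^{4,\alpha}$ metric on $X$, $D_jD_k\Omega(i)=2\gamma_{jk}(i)$ ($D$ the connection of $\gamma$). Rescaled potentials $\phi=\tilde\phi/\sqrt\Omega$. Known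 facts: in $\gamma$-normal coordinates $x^i$ centered at $i$, $\gamma_{ij},\phi_M,\phi_S,\Omega$ are real-analytic; $\phi_M=M+O(r)$, $\phi_S=S^ix_i+O(r^2)$ with $r=(\sum_j(x^j)^2)^{1/2}$; $\Omega=r^2f_\Omega$ with $f_\Omega$ analytic, positive, $f_\Omega(i)=1$; and $\phi_K=f_K/\sqrt\Omega$ with $f_K=\sqrt{\Omega(\phi_M^2+\phi_S^2)+1/4}$. Define $J^1_j=\phi_S D_j\phi_M-\phi_M D_j\phi_S$ and $J^3_j=\phi_S D_j\phi_K-\phi_K D_j\phi_S$. *)

theory Defs
  imports "HOL-Analysis.Analysis"
begin

text \<open>Points of the coordinate chart are vectors in R^3 (gamma-normal coordinates x^i,
  the point i at infinity being the origin).\<close>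

text \<open>Real-analyticity in several variables: near each point of U the function is the sum
  of an (unconditionally, i.e. absolutely) convergent power series in the multi-index variables.\<close>
definition real_analytic_on :: "(real^3 \<Rightarrow> real) \<Rightarrow> (real^3) set \<Rightarrow> bool" where
  "real_analytic_on f U \<longleftrightarrow>
     (\<forall>a\<in>U. \<exists>c :: (3 \<Rightarrow> nat) \<Rightarrow> real. \<exists>e>0. \<forall>x\<in>ball a e.
        ((\<lambda>\<alpha>. c \<alpha> * (\<Prod>k\<in>UNIV. (x$k - a$k) ^ (\<alpha> k))) has_sum f x) UNIV)"

definition pd :: "(real^3 \<Rightarrow> real) \<Rightarrow> 3 \<Rightarrow> real^3 \<Rightarrow> real" where
  "pd f j x = deriv (\<lambda>t. f (x + t *\<^sub>R axis j 1)) 0"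

definition phiK :: "(real^3 \<Rightarrow> real) \<Rightarrow> (real^3 \<Rightarrow> real) \<Rightarrow> (real^3 \<Rightarrow> real) \<Rightarrow> real^3 \<Rightarrow> real" where
  "phiK \<Omega> phiM phiS x =
     sqrt (\<Omega> x * ((phiM x)\<^sup>2 + (phiS x)\<^sup>2) + 1/4) / sqrt (\<Omega> x)"

definition J1 :: "(real^3 \<Rightarrow> real) \<Rightarrow> (real^3 \<Rightarrow> real) \<Rightarrow> real^3 \<Rightarrow> real^3" where
  "J1 phiM phiS x = (\<chi> j. phiS x * pd phiM j x - phiM x * pd phiS j x)"

definition J3 :: "(real^3 \<Rightarrow> real) \<Rightarrow> (real^3 \<Rightarrow> real) \<Rightarrow> (real^3 \<Rightarrow> real) \<Rightarrow> real^3 \<Rightarrow> real^3" where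
  "J3 \<Omega> phiM phiS x =
     (\<chi> j. phiS x * pd (phiK \<Omega> phiM phiS) j x - phiK \<Omega> phiM phiS x * pd phiS j x)"

definition Jvec :: "(real^3 \<Rightarrow> real^3^3) \<Rightarrow> (real^3 \<Rightarrow> real) \<Rightarrow> (real^3 \<Rightarrow> real) \<Rightarrow> (real^3 \<Rightarrow> real)
                    \<Rightarrow> real^3 \<Rightarrow> real^3" where
  "Jvec \<gamma> \<Omega> phiM phiS x =
     (-4 / sqrt \<bar>det (\<gamma> x)\<bar>) *\<^sub>R
       (matrix_inv (\<gamma> x) *v (J1 phiM phiS x - J3 \<Omega> phiM phiS x))"

end

theory Submission
  imports Defs
begin

definition mnm :: "real^3 \<Rightarrow> (3\<Rightarrow>nat) \<Rightarrow> real" where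
  "mnm v \<alpha> = (\<Prod>k\<in>UNIV. (v$k)^(\<alpha> k))"

definition deg :: "(3\<Rightarrow>nat) \<Rightarrow> nat" where
  "deg \<alpha> = (\<Sum>k\<in>UNIV. \<alpha> k)"

definition ps :: "(real^3\<Rightarrow>real) \<Rightarrow> real^3 \<Rightarrow> bool" where
  "ps f a \<longleftrightarrow> (\<exists>c t e. 0<t \<and> 0<e \<and> (\<lambda>\<alpha>. \<bar>c \<alpha>\<bar> * t^deg \<alpha>) summable_on UNIV \<and>
      (\<forall>x\<in>ball a e. ((\<lambda>\<alpha>. c \<alpha> * mnm (x-a) \<alpha>) has_sum f x) UNIV))"

lemma mnm_bound:
  assumes "\<And>k. \<bar>v$k\<bar> \<le> t"
  shows "\<bar>mnm v \<alpha>\<bar> \<le> t^deg \<alpha>"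
proof -
  have "\<bar>mnm v \<alpha>\<bar> = (\<Prod>k\<in>UNIV. \<bar>v$k\<bar>^(\<alpha> k))"
    by (simp add: mnm_def abs_prod power_abs)
  also have "\<dots> \<le> (\<Prod>k\<in>UNIV. t^(\<alpha> k))"
    by (intro prod_mono conjI power_mono assms) auto
  also have "\<dots> = t^deg \<alpha>" by (simp add: deg_def power_sum)
  finally show ?thesis .
qed

lemma mnm_add: "mnm v (\<lambda>k. \<alpha> k + \<beta> k) = mnm v \<alpha> * mnm v \<beta>"
  by (simp add: mnm_def power_add prod.distrib)

lemma deg_add: "deg (\<lambda>k. \<alpha> k + \<beta> k) = deg \<alpha> + deg \<beta>"
  by (simp add: deg_def sum.distrib)

lemma mnm_zero[simp]: "mnm v (\<lambda>k. 0) = 1" by (simp add: mnm_def)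
lemma deg_zero[simp]: "deg (\<lambda>k. 0) = 0" by (simp add: deg_def)
lemma mnm_0v: "mnm 0 \<alpha> = (if \<alpha> = (\<lambda>k. 0) then 1 else 0)"
proof (cases "\<alpha> = (\<lambda>k. 0)")
  case False
  then obtain k where "\<alpha> k \<noteq> 0" by auto
  then show ?thesis using False
    by (auto simp: mnm_def prod_zero_iff intro!: bexI[where x=k])
qed simp

lemma comp_le_norm: "\<bar>v$k\<bar> \<le> norm (v::real^3)"
  using component_le_norm_cart[of v k] by simp

lemma real_analytic_ps: "real_analytic_on f U \<longleftrightarrow> (\<forall>a\<in>U. ps f a)"
proof
  assume H: "real_analytic_on f U"
  show "\<forall>a\<in>U. ps f a"
  proof
    fix a assume "a \<in> U"
    then obtain c e where e: "e>0" and hs: "\<And>x. x\<in>ball a e \<Longrightarrow>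
        ((\<lambda>\<alpha>. c \<alpha> * (\<Prod>k\<in>UNIV. (x$k - a$k) ^ (\<alpha> k))) has_sum f x) UNIV"
      using H unfolding real_analytic_on_def by blast
    have hs': "((\<lambda>\<alpha>. c \<alpha> * mnm (x-a) \<alpha>) has_sum f x) UNIV" if "x\<in>ball a e" for x
      using hs[OF that] unfolding mnm_def by simp
    define t where "t = e/4"
    define x0 where "x0 = a + (\<chi> k. t)"
    have "norm (\<chi> k::3. t) \<le> (\<Sum>i\<in>UNIV. \<bar>(\<chi> k::3. t)$i\<bar>)" by (rule norm_le_l1_cart)
    also have "\<dots> = 3 * t" using e by (simp add: t_def)
    also have "\<dots> < e" using e by (simp add: t_def)
    finally have "norm (\<chi> k::3. t) < e" .
    moreover have "dist a x0 = norm (\<chi> k::3. t)" unfolding x0_def dist_norm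
      by (metis add_diff_cancel_left' norm_minus_commute)
    ultimately have "x0 \<in> ball a e" by simp
    from hs'[OF this] have "(\<lambda>\<alpha>. c \<alpha> * mnm (x0-a) \<alpha>) summable_on UNIV"
      by (rule has_sum_imp_summable)
    hence "(\<lambda>\<alpha>. norm (c \<alpha> * mnm (x0-a) \<alpha>)) summable_on UNIV"
      by (rule summable_on_iff_abs_summable_on_real[THEN iffD1])
    moreover have "mnm (x0-a) \<alpha> = t^deg \<alpha>" for \<alpha>
      unfolding x0_def mnm_def deg_def power_sum by simp
    ultimately have "(\<lambda>\<alpha>. \<bar>c \<alpha>\<bar> * t^deg \<alpha>) summable_on UNIV"
      using e by (simp add: abs_mult t_def)
    moreover have "t > 0" using e by (simp add: t_def)
    ultimately show "ps f a" unfolding ps_def using e hs' by blast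
  qed
next
  assume H: "\<forall>a\<in>U. ps f a"
  show "real_analytic_on f U" unfolding real_analytic_on_def
  proof
    fix a assume "a\<in>U"
    then obtain c t e where "e>0" "\<forall>x\<in>ball a e. ((\<lambda>\<alpha>. c \<alpha> * mnm (x-a) \<alpha>) has_sum f x) UNIV"
      using H unfolding ps_def by blast
    then show "\<exists>c. \<exists>e>0. \<forall>x\<in>ball a e. ((\<lambda>\<alpha>. c \<alpha> * (\<Prod>k\<in>UNIV. (x$k - a$k) ^ (\<alpha> k))) has_sum f x) UNIV"
      unfolding mnm_def by auto
  qed
qed

lemma ps_group:
  fixes c :: "'i \<Rightarrow> real" and p :: "'i \<Rightarrow> (3\<Rightarrow>nat)"
  assumes t: "0<t" and e: "0<e" and sm: "(\<lambda>i. \<bar>c i\<bar> * t^deg (p i)) summable_on I"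
    and hs: "\<And>x. x\<in>ball a e \<Longrightarrow> ((\<lambda>i. c i * mnm (x-a) (p i)) has_sum f x) I"
  shows "ps f a"
proof -
  define B where "B \<alpha> = {i\<in>I. p i = \<alpha>}" for \<alpha>
  define C where "C \<alpha> = infsum c (B \<alpha>)" for \<alpha>
  have reidx: "(g has_sum s) (Sigma UNIV B) \<longleftrightarrow> ((\<lambda>i. g (p i, i)) has_sum s) I" for g :: "_ \<Rightarrow> real" and s
    by (rule has_sum_reindex_bij_witness[where j=snd and i="\<lambda>i. (p i, i)"]) (auto simp: B_def)
  have cB: "c summable_on B \<alpha>" for \<alpha>
  proof -
    have "(\<lambda>i. \<bar>c i\<bar> * t^deg (p i)) summable_on B \<alpha>"
      by (rule summable_on_subset_banach[OF sm]) (auto simp: B_def)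
    hence "(\<lambda>i. \<bar>c i\<bar> * t^deg \<alpha>) summable_on B \<alpha>"
      by (rule summable_on_cong[THEN iffD1, rotated]) (auto simp: B_def)
    hence "(\<lambda>i. (\<bar>c i\<bar> * t^deg \<alpha>) * (1/t^deg \<alpha>)) summable_on B \<alpha>"
      by (rule summable_on_cmult_left)
    hence "(\<lambda>i. norm (c i)) summable_on B \<alpha>" using t by simp
    thus ?thesis using summable_on_iff_abs_summable_on_real by blast
  qed
  have S1: "((\<lambda>(\<alpha>,i). \<bar>c i\<bar> * t^deg (p i)) has_sum infsum (\<lambda>i. \<bar>c i\<bar> * t^deg (p i)) I) (Sigma UNIV B)"
    unfolding reidx using sm by simp
  have fib1: "((\<lambda>i. \<bar>c i\<bar> * t^deg (p i)) has_sum infsum (\<lambda>i. \<bar>c i\<bar> * t^deg (p i)) (B \<alpha>)) (B \<alpha>)" for \<alpha>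
    using summable_on_subset_banach[OF sm, of "B \<alpha>"] by (auto simp: B_def)
  have G1: "(\<lambda>\<alpha>. infsum (\<lambda>i. \<bar>c i\<bar> * t^deg (p i)) (B \<alpha>)) summable_on UNIV"
    using has_sum_SigmaD[OF S1, of "\<lambda>\<alpha>. infsum (\<lambda>i. \<bar>c i\<bar> * t^deg (p i)) (B \<alpha>)"] fib1
    by (auto simp: summable_on_def)
  have "(\<lambda>\<alpha>. \<bar>C \<alpha>\<bar> * t^deg \<alpha>) summable_on UNIV"
  proof (rule summable_on_comparison_test[OF G1])
    fix \<alpha> :: "3\<Rightarrow>nat"
    have "\<bar>C \<alpha>\<bar> * t^deg \<alpha> \<le> infsum (\<lambda>i. \<bar>c i\<bar>) (B \<alpha>) * t^deg \<alpha>"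
      unfolding C_def using norm_infsum_bound[of c "B \<alpha>"] t cB[of \<alpha>] summable_on_iff_abs_summable_on_real
      by (intro mult_right_mono) auto
    also have "\<dots> = infsum (\<lambda>i. \<bar>c i\<bar> * t^deg \<alpha>) (B \<alpha>)"
      by (rule infsum_cmult_left[symmetric]) (use cB summable_on_iff_abs_summable_on_real in auto)
    also have "\<dots> = infsum (\<lambda>i. \<bar>c i\<bar> * t^deg (p i)) (B \<alpha>)"
      by (rule infsum_cong) (auto simp: B_def)
    finally show "\<bar>C \<alpha>\<bar> * t^deg \<alpha> \<le> infsum (\<lambda>i. \<bar>c i\<bar> * t^deg (p i)) (B \<alpha>)" .
  qed (use t in auto)
  moreover have "((\<lambda>\<alpha>. C \<alpha> * mnm (x-a) \<alpha>) has_sum f x) UNIV" if x: "x\<in>ball a e" for x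
  proof -
    have S2: "((\<lambda>(\<alpha>,i). c i * mnm (x-a) (p i)) has_sum f x) (Sigma UNIV B)"
      unfolding reidx using hs[OF x] by simp
    have "((\<lambda>i. c i * mnm (x-a) \<alpha>) has_sum C \<alpha> * mnm (x-a) \<alpha>) (B \<alpha>)" for \<alpha>
      unfolding C_def by (rule has_sum_cmult_left) (use cB in auto)
    hence "((\<lambda>i. c i * mnm (x-a) (p i)) has_sum C \<alpha> * mnm (x-a) \<alpha>) (B \<alpha>)" for \<alpha>
      by (rule has_sum_cong[THEN iffD1, rotated]) (auto simp: B_def)
    then show ?thesis using has_sum_SigmaD[OF S2] by auto
  qed
  ultimately show ?thesis unfolding ps_def using t e by blast
qed

lemma real_summable_abs: "(f::'a\<Rightarrow>real) summable_on A \<Longrightarrow> (\<lambda>x. \<bar>f x\<bar>) summable_on A"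
  using summable_on_iff_abs_summable_on_real[THEN iffD1] by (simp only: real_norm_def)

lemma has_sum_product_real:
  fixes f :: "'a \<Rightarrow> real" and g :: "'b \<Rightarrow> real"
  assumes f: "(f has_sum F) A" and g: "(g has_sum G) B"
  shows "((\<lambda>(a,b). f a * g b) has_sum F*G) (A \<times> B)"
proof -
  have fa: "(\<lambda>x. \<bar>f x\<bar>) summable_on A" using f real_summable_abs has_sum_imp_summable by blast
  have ga: "(\<lambda>x. \<bar>g x\<bar>) summable_on B" using g real_summable_abs has_sum_imp_summable by blast
  have "(\<lambda>(a,b). \<bar>f a\<bar> * \<bar>g b\<bar>) summable_on Sigma A (\<lambda>_. B)"
  proof (rule summable_on_SigmaI[where g="\<lambda>a. \<bar>f a\<bar> * infsum (\<lambda>x. \<bar>g x\<bar>) B"])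
    show "((\<lambda>y. case (x, y) of (a, b) \<Rightarrow> \<bar>f a\<bar> * \<bar>g b\<bar>) has_sum \<bar>f x\<bar> * infsum (\<lambda>x. \<bar>g x\<bar>) B) B" for x
      using has_sum_cmult_right[OF ga[unfolded summable_iff_has_sum_infsum], of "\<bar>f x\<bar>"] by simp
    show "(\<lambda>a. \<bar>f a\<bar> * infsum (\<lambda>x. \<bar>g x\<bar>) B) summable_on A"
      using fa by (rule summable_on_cmult_left)
  qed auto
  hence "(\<lambda>p. norm ((\<lambda>(a,b). f a * g b) p)) summable_on A \<times> B"
    by (simp add: case_prod_unfold abs_mult)
  hence sm: "(\<lambda>(a,b). f a * g b) summable_on A \<times> B"
    by (rule abs_summable_summable)
  show ?thesis
  proof (rule has_sum_SigmaI[where g="\<lambda>a. f a * G"])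
    show "((\<lambda>y. case (x, y) of (a, b) \<Rightarrow> f a * g b) has_sum f x * G) B" for x
      using has_sum_cmult_right[OF g, of "f x"] by simp
    show "((\<lambda>a. f a * G) has_sum F * G) A" using has_sum_cmult_left[OF f] by simp
  qed (use sm in auto)
qed

lemma summable_t_mono:
  fixes c :: "(3\<Rightarrow>nat) \<Rightarrow> real" and t s :: real
  assumes "(\<lambda>\<alpha>. \<bar>c \<alpha>\<bar> * t^deg \<alpha>) summable_on UNIV" "0 \<le> s" "s \<le> t"
  shows "(\<lambda>\<alpha>. \<bar>c \<alpha>\<bar> * s^deg \<alpha>) summable_on UNIV"
  by (rule summable_on_comparison_test[OF assms(1)])
     (use assms in \<open>auto intro!: mult_left_mono power_mono\<close>)

lemma psE:
  fixes f :: "real^3 \<Rightarrow> real"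
  assumes "ps f a"
  obtains c t e where "0<(t::real)" "0<(e::real)" "(\<lambda>\<alpha>. \<bar>c \<alpha>\<bar> * t^deg \<alpha>) summable_on UNIV"
      "\<And>x. x\<in>ball a e \<Longrightarrow> ((\<lambda>\<alpha>. c \<alpha> * mnm (x-a) \<alpha>) has_sum f x) UNIV"
proof -
  from assms obtain c t e where h: "0<(t::real)" "0<(e::real)" "(\<lambda>\<alpha>. \<bar>c \<alpha>\<bar> * t^deg \<alpha>) summable_on UNIV"
      "\<forall>x\<in>ball a e. ((\<lambda>\<alpha>. c \<alpha> * mnm (x-a) \<alpha>) has_sum f x) UNIV"
    unfolding ps_def by blast
  show thesis by (rule that[OF h(1) h(2) h(3)]) (use h(4) in blast)
qed

lemma psI:
  fixes f :: "real^3 \<Rightarrow> real" and c :: "(3\<Rightarrow>nat) \<Rightarrow> real" and t e :: real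
  assumes "0<t" "0<e" "(\<lambda>\<alpha>. \<bar>c \<alpha>\<bar> * t^deg \<alpha>) summable_on UNIV"
      "\<And>x. x\<in>ball a e \<Longrightarrow> ((\<lambda>\<alpha>. c \<alpha> * mnm (x-a) \<alpha>) has_sum f x) UNIV"
  shows "ps f a"
  using assms unfolding ps_def by blast

lemma ps_cong:
  assumes "ps f a" "0<d" "\<And>x. x\<in>ball a d \<Longrightarrow> f x = g x"
  shows "ps g a"
proof -
  obtain c t e where *: "0<(t::real)" "0<(e::real)" "(\<lambda>\<alpha>. \<bar>c \<alpha>\<bar> * t^deg \<alpha>) summable_on UNIV"
      "\<forall>x\<in>ball a e. ((\<lambda>\<alpha>. c \<alpha> * mnm (x-a) \<alpha>) has_sum f x) UNIV"
    using assms(1) unfolding ps_def by blast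
  show ?thesis
  proof (rule psI[of t "min e d"])
    fix x assume "x \<in> ball a (min e d)"
    then show "((\<lambda>\<alpha>. c \<alpha> * mnm (x-a) \<alpha>) has_sum g x) UNIV"
      using *(4)[rule_format, of x] assms(3)[of x] by auto
  qed (use * assms in auto)
qed

lemma ps_const: "ps (\<lambda>x. k) a"
proof (rule ps_group[where I="UNIV::unit set" and c="\<lambda>_. k" and p="\<lambda>_ k. 0" and t=1 and e=1])
  fix x :: "real^3"
  show "((\<lambda>i::unit. k * mnm (x - a) (\<lambda>k. 0)) has_sum k) UNIV"
    using has_sum_finite[of "UNIV::unit set" "\<lambda>i. k * mnm (x - a) (\<lambda>k. 0)"] by simp
qed auto

lemma mnm_delta: "mnm v (\<lambda>k. if k = j then 1 else 0) = v$j"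
proof -
  have "(\<Prod>k\<in>UNIV. v$k ^ (if k = j then 1 else 0)) = (\<Prod>k\<in>UNIV. if k = j then v$k else 1)"
    by (rule prod.cong) auto
  then show ?thesis unfolding mnm_def by simp
qed

lemma ps_coord: "ps (\<lambda>x. x$j) a"
proof (rule ps_group[where I="UNIV::bool set" and c="\<lambda>b. if b then a$j else 1"
      and p="\<lambda>b. if b then (\<lambda>k. 0) else (\<lambda>k. if k = j then 1 else 0)" and t=1 and e=1])
  fix x :: "real^3"
  have "((\<lambda>i. (if i then a$j else 1) * mnm (x - a) (if i then (\<lambda>k. 0) else (\<lambda>k. if k = j then 1 else 0)))
     has_sum (\<Sum>i\<in>UNIV. (if i then a$j else 1) * mnm (x - a) (if i then (\<lambda>k. 0) else (\<lambda>k. if k = j then 1 else 0)))) UNIV"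
    by (rule has_sum_finite) simp
  also have "(\<Sum>i\<in>UNIV. (if i then a$j else 1) * mnm (x - a) (if i then (\<lambda>k. 0) else (\<lambda>k. if k = j then 1 else 0))) = x$j"
    by (simp add: UNIV_bool mnm_delta)
  finally show "((\<lambda>i. (if i then a$j else 1) * mnm (x - a) (if i then (\<lambda>k. 0) else (\<lambda>k. if k = j then 1 else 0))) has_sum x$j) UNIV" .
qed auto

lemma ps_add:
  assumes "ps f a" "ps g a"
  shows "ps (\<lambda>x. f x + g x) a"
proof -
  obtain c1 t1 e1 where 1: "0<(t1::real)" "0<(e1::real)" "(\<lambda>\<alpha>. \<bar>c1 \<alpha>\<bar> * t1^deg \<alpha>) summable_on UNIV"
      "\<forall>x\<in>ball a e1. ((\<lambda>\<alpha>. c1 \<alpha> * mnm (x-a) \<alpha>) has_sum f x) UNIV"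
    using assms(1) unfolding ps_def by blast
  obtain c2 t2 e2 where 2: "0<(t2::real)" "0<(e2::real)" "(\<lambda>\<alpha>. \<bar>c2 \<alpha>\<bar> * t2^deg \<alpha>) summable_on UNIV"
      "\<forall>x\<in>ball a e2. ((\<lambda>\<alpha>. c2 \<alpha> * mnm (x-a) \<alpha>) has_sum g x) UNIV"
    using assms(2) unfolding ps_def by blast
  let ?t = "min t1 t2"
  have s1: "(\<lambda>\<alpha>. \<bar>c1 \<alpha>\<bar> * ?t^deg \<alpha>) summable_on UNIV"
    by (rule summable_t_mono[OF 1(3)]) (use 1 2 in auto)
  have s2: "(\<lambda>\<alpha>. \<bar>c2 \<alpha>\<bar> * ?t^deg \<alpha>) summable_on UNIV"
    by (rule summable_t_mono[OF 2(3)]) (use 1 2 in auto)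
  show ?thesis
  proof (rule psI[of ?t "min e1 e2" "\<lambda>\<alpha>. c1 \<alpha> + c2 \<alpha>"])
    show "(\<lambda>\<alpha>. \<bar>c1 \<alpha> + c2 \<alpha>\<bar> * ?t^deg \<alpha>) summable_on UNIV"
    proof (rule summable_on_comparison_test[OF summable_on_add[OF s1 s2]])
      fix \<alpha> :: "3\<Rightarrow>nat"
      have "\<bar>c1 \<alpha> + c2 \<alpha>\<bar> * ?t^deg \<alpha> \<le> (\<bar>c1 \<alpha>\<bar> + \<bar>c2 \<alpha>\<bar>) * ?t^deg \<alpha>"
        using 1 2 by (intro mult_right_mono abs_triangle_ineq) auto
      thus "\<bar>c1 \<alpha> + c2 \<alpha>\<bar> * ?t^deg \<alpha> \<le> \<bar>c1 \<alpha>\<bar> * ?t^deg \<alpha> + \<bar>c2 \<alpha>\<bar> * ?t^deg \<alpha>"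
        by (simp add: algebra_simps)
    qed (use 1 2 in auto)
    fix x assume "x \<in> ball a (min e1 e2)"
    then show "((\<lambda>\<alpha>. (c1 \<alpha> + c2 \<alpha>) * mnm (x-a) \<alpha>) has_sum f x + g x) UNIV"
      using has_sum_add[OF 1(4)[rule_format, of x] 2(4)[rule_format, of x]] by (simp add: algebra_simps)
  qed (use 1 2 in auto)
qed

lemma ps_mult:
  assumes "ps f a" "ps g a"
  shows "ps (\<lambda>x. f x * g x) a"
proof -
  obtain c1 t1 e1 where 1: "0<(t1::real)" "0<(e1::real)" "(\<lambda>\<alpha>. \<bar>c1 \<alpha>\<bar> * t1^deg \<alpha>) summable_on UNIV"
      "\<forall>x\<in>ball a e1. ((\<lambda>\<alpha>. c1 \<alpha> * mnm (x-a) \<alpha>) has_sum f x) UNIV"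
    using assms(1) unfolding ps_def by blast
  obtain c2 t2 e2 where 2: "0<(t2::real)" "0<(e2::real)" "(\<lambda>\<alpha>. \<bar>c2 \<alpha>\<bar> * t2^deg \<alpha>) summable_on UNIV"
      "\<forall>x\<in>ball a e2. ((\<lambda>\<alpha>. c2 \<alpha> * mnm (x-a) \<alpha>) has_sum g x) UNIV"
    using assms(2) unfolding ps_def by blast
  let ?t = "min t1 t2"
  have s1: "(\<lambda>\<alpha>. \<bar>c1 \<alpha>\<bar> * ?t^deg \<alpha>) summable_on UNIV"
    by (rule summable_t_mono[OF 1(3)]) (use 1 2 in auto)
  have s2: "(\<lambda>\<alpha>. \<bar>c2 \<alpha>\<bar> * ?t^deg \<alpha>) summable_on UNIV"
    by (rule summable_t_mono[OF 2(3)]) (use 1 2 in auto)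
  show ?thesis
  proof (rule ps_group[where I="UNIV \<times> UNIV" and c="\<lambda>(\<alpha>,\<beta>). c1 \<alpha> * c2 \<beta>"
        and p="\<lambda>(\<alpha>,\<beta>). (\<lambda>k. \<alpha> k + \<beta> k)" and t="?t" and e="min e1 e2"])
    have "((\<lambda>(\<alpha>,\<beta>). (\<bar>c1 \<alpha>\<bar> * ?t^deg \<alpha>) * (\<bar>c2 \<beta>\<bar> * ?t^deg \<beta>)) has_sum
        infsum (\<lambda>\<alpha>. \<bar>c1 \<alpha>\<bar> * ?t^deg \<alpha>) UNIV * infsum (\<lambda>\<alpha>. \<bar>c2 \<alpha>\<bar> * ?t^deg \<alpha>) UNIV) (UNIV \<times> UNIV)"
      by (rule has_sum_product_real) (use s1 s2 in auto)
    then show "(\<lambda>i. \<bar>case i of (\<alpha>, \<beta>) \<Rightarrow> c1 \<alpha> * c2 \<beta>\<bar> * ?t ^ deg (case i of (\<alpha>, \<beta>) \<Rightarrow> (\<lambda>k. \<alpha> k + \<beta> k))) summable_on UNIV \<times> UNIV"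
      by (auto simp: summable_on_def case_prod_unfold deg_add power_add abs_mult mult_ac)
    fix x assume x: "x \<in> ball a (min e1 e2)"
    have "((\<lambda>(\<alpha>,\<beta>). (c1 \<alpha> * mnm (x-a) \<alpha>) * (c2 \<beta> * mnm (x-a) \<beta>)) has_sum f x * g x) (UNIV \<times> UNIV)"
      by (rule has_sum_product_real) (use 1(4)[rule_format, of x] 2(4)[rule_format, of x] x in auto)
    then show "((\<lambda>i. (case i of (\<alpha>, \<beta>) \<Rightarrow> c1 \<alpha> * c2 \<beta>) * mnm (x - a) (case i of (\<alpha>, \<beta>) \<Rightarrow> (\<lambda>k. \<alpha> k + \<beta> k))) has_sum f x * g x) (UNIV \<times> UNIV)"
      by (simp add: case_prod_unfold mnm_add mult_ac)
  qed (use 1 2 in auto)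
qed

lemma ps_sum:
  assumes "finite S" "\<And>i. i\<in>S \<Longrightarrow> ps (f i) a"
  shows "ps (\<lambda>x. \<Sum>i\<in>S. f i x) a"
  using assms by (induction S rule: finite_induct) (auto intro: ps_add ps_const)

lemma ps_prod:
  assumes "finite S" "\<And>i. i\<in>S \<Longrightarrow> ps (f i) a"
  shows "ps (\<lambda>x. \<Prod>i\<in>S. f i x) a"
  using assms by (induction S rule: finite_induct) (auto intro: ps_mult ps_const)

lemma ps_minus: "ps f a \<Longrightarrow> ps (\<lambda>x. - f x) a"
  using ps_mult[OF ps_const[of "-1"]] by simp

lemma ps_diff: "ps f a \<Longrightarrow> ps g a \<Longrightarrow> ps (\<lambda>x. f x - g x) a"
  using ps_add[OF _ ps_minus] by simp

lemma has_sum_lists_pow: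
  fixes u :: "'a \<Rightarrow> real"
  assumes "(u has_sum U) UNIV"
  shows "((\<lambda>xs. prod_list (map u xs)) has_sum U^n) {xs. length xs = n}"
proof (induction n)
  case 0
  have "{xs::'a list. length xs = 0} = {[]}" by auto
  then show ?case using has_sum_finite[of "{[]}" "\<lambda>xs. prod_list (map u xs)"] by simp
next
  case (Suc n)
  have P: "((\<lambda>(x,xs). u x * prod_list (map u xs)) has_sum U * U^n) (UNIV \<times> {xs. length xs = n})"
    by (rule has_sum_product_real[OF assms Suc])
  have "((\<lambda>xs. prod_list (map u xs)) has_sum U * U^n) {xs. length xs = Suc n} \<longleftrightarrow>
        ((\<lambda>(x,xs). u x * prod_list (map u xs)) has_sum U * U^n) (UNIV \<times> {xs. length xs = n})"
    by (rule has_sum_reindex_bij_witness[where j="\<lambda>xs. (hd xs, tl xs)" and i="\<lambda>(x,xs). x#xs"])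
       (auto simp: length_Suc_conv)
  with P show ?case by simp
qed

lemma sums_has_sum_real:
  fixes f :: "nat \<Rightarrow> real"
  assumes "summable (\<lambda>n. \<bar>f n\<bar>)" "f sums S"
  shows "(f has_sum S) UNIV"
  using norm_summable_imp_has_sum[of f S] assms by simp

lemma deg_zero_iff: "deg \<alpha> = 0 \<longleftrightarrow> \<alpha> = (\<lambda>k. 0)"
  by (auto simp: deg_def)

definition lsum :: "(3\<Rightarrow>nat) list \<Rightarrow> (3\<Rightarrow>nat)" where
  "lsum xs = (\<lambda>k. sum_list (map (\<lambda>\<alpha>. \<alpha> k) xs))"

lemma lsum_simps: "lsum [] = (\<lambda>k. 0)" "lsum (x#xs) = (\<lambda>k. x k + lsum xs k)"
  by (auto simp: lsum_def)

lemma mnm_lsum: "mnm v (lsum xs) = prod_list (map (mnm v) xs)"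
  by (induction xs) (simp_all add: lsum_simps mnm_add)

lemma pow_deg_lsum: "(t::real)^deg (lsum xs) = prod_list (map (\<lambda>\<alpha>. t^deg \<alpha>) xs)"
  by (induction xs) (simp_all add: lsum_simps deg_add power_add)

lemma ps_at_center:
  assumes "0 < e" "((\<lambda>\<alpha>. c \<alpha> * mnm (a-a) \<alpha>) has_sum y) UNIV"
  shows "y = c (\<lambda>k. 0)"
proof -
  have "((\<lambda>\<alpha>. c \<alpha> * mnm (a-a) \<alpha>) has_sum c (\<lambda>k. 0)) UNIV"
  proof (rule has_sum_cong_neutral[where S="{\<lambda>k. 0}" and T=UNIV, THEN iffD1])
    show "((\<lambda>\<alpha>. c \<alpha> * mnm (a-a) \<alpha>) has_sum c (\<lambda>k. 0)) {\<lambda>k. 0}"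
      using has_sum_finite[of "{\<lambda>k::3. 0::nat}" "\<lambda>\<alpha>. c \<alpha> * mnm (a-a) \<alpha>"] by simp
  qed (auto simp: mnm_0v)
  with assms(2) show ?thesis using has_sum_unique by blast
qed

lemma has_sum_diff_real:
  "(f has_sum F) A \<Longrightarrow> (g has_sum G) A \<Longrightarrow> ((\<lambda>x. f x - g x) has_sum (F - (G::real))) A"
proof -
  assume f: "(f has_sum F) A" and g: "(g has_sum G) A"
  have "((\<lambda>x. - g x) has_sum - G) A" using has_sum_uminus[of g A "-G"] g by simp
  from has_sum_add[OF f this] show ?thesis by simp
qed

lemma has_sum_single: "((\<lambda>x. if x = z then v else 0) has_sum (v::real)) UNIV"
proof (rule has_sum_cong_neutral[where S="{z}" and T=UNIV, THEN iffD1])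
  show "((\<lambda>x. if x = z then v else 0) has_sum v) {z}"
    using has_sum_finite[of "{z}" "\<lambda>x. if x = z then v else 0"] by simp
qed auto

lemma lists_reidx:
  "(F has_sum S) (UNIV :: 'a list set) \<longleftrightarrow> ((\<lambda>(n,xs). F xs) has_sum S) (Sigma UNIV (\<lambda>n. {xs. length xs = n}))"
  by (rule has_sum_reindex_bij_witness[where j="\<lambda>xs. (length xs, xs)" and i=snd]) auto

lemma lists_reidx_summable:
  "F summable_on (UNIV :: 'a list set) \<longleftrightarrow> (\<lambda>(n,xs). F xs) summable_on (Sigma UNIV (\<lambda>n. {xs. length xs = n}))"
  by (rule summable_on_reindex_bij_witness[where j="\<lambda>xs. (length xs, xs)" and i=snd]) auto

lemma prod_list_map_mult: "prod_list (map (\<lambda>x. f x * g x) xs) = prod_list (map f xs) * (prod_list (map g xs) :: real)"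
  by (induction xs) auto

lemma prod_list_map_abs: "\<bar>prod_list (map f xs)\<bar> = prod_list (map (\<lambda>x. \<bar>f x\<bar>) xs :: real list)"
  by (induction xs) (auto simp: abs_mult)

lemma prod_list_nonneg_map: "(\<And>x. 0 \<le> f x) \<Longrightarrow> 0 \<le> prod_list (map f xs :: real list)"
  by (induction xs) auto

lemma ps_compose:
  fixes h :: "real^3 \<Rightarrow> real" and b :: "nat \<Rightarrow> real" and g :: "real \<Rightarrow> real"
  assumes h: "ps h a" and R: "0 < R"
   and bsum: "\<And>s. 0 \<le> s \<Longrightarrow> s < R \<Longrightarrow> summable (\<lambda>n. \<bar>b n\<bar> * s^n)"
   and gser: "\<And>y. \<bar>y - h a\<bar> < R \<Longrightarrow> (\<lambda>n. b n * (y - h a)^n) sums g y"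
  shows "ps (\<lambda>x. g (h x)) a"
proof -
  obtain c t0 e0 where 0: "0<(t0::real)" "0<(e0::real)" "(\<lambda>\<alpha>. \<bar>c \<alpha>\<bar> * t0^deg \<alpha>) summable_on UNIV"
      "\<forall>x\<in>ball a e0. ((\<lambda>\<alpha>. c \<alpha> * mnm (x-a) \<alpha>) has_sum h x) UNIV"
    using h unfolding ps_def by blast
  have ha: "h a = c (\<lambda>k. 0)"
  proof -
    have "a \<in> ball a e0" using 0(2) by simp
    then show ?thesis using ps_at_center[OF 0(2) 0(4)[rule_format]] by blast
  qed
  define y0 where "y0 = h a"
  define d where "d \<alpha> = (if \<alpha> = (\<lambda>k. 0) then 0 else c \<alpha>)" for \<alpha>
  have dx: "((\<lambda>\<alpha>. d \<alpha> * mnm (x-a) \<alpha>) has_sum h x - y0) UNIV" if "x \<in> ball a e0" for x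
  proof -
    have "((\<lambda>\<alpha>. c \<alpha> * mnm (x-a) \<alpha> - (if \<alpha> = (\<lambda>k. 0) then c (\<lambda>k. 0) else 0)) has_sum h x - y0) UNIV"
      using has_sum_diff_real[OF 0(4)[rule_format, OF that] has_sum_single[of "\<lambda>k. 0" "c (\<lambda>k. 0)"]]
      by (simp add: y0_def ha)
    then show ?thesis by (rule has_sum_cong[THEN iffD1, rotated]) (auto simp: d_def)
  qed
  have dle: "\<bar>d \<alpha>\<bar> \<le> \<bar>c \<alpha>\<bar>" for \<alpha> by (simp add: d_def)
  have ds0: "(\<lambda>\<alpha>. \<bar>d \<alpha>\<bar> * t0^deg \<alpha>) summable_on UNIV"
    by (rule summable_on_comparison_test[OF 0(3)]) (use 0 dle in \<open>auto intro: mult_right_mono\<close>)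
  define D0 where "D0 = infsum (\<lambda>\<alpha>. \<bar>d \<alpha>\<bar> * t0^deg \<alpha>) UNIV"
  have D0: "D0 \<ge> 0" unfolding D0_def by (rule infsum_nonneg) (use 0(1) in auto)
  define s where "s = R/2"
  have s: "0 < s" "s < R" using R by (auto simp: s_def)
  define t where "t = min t0 (t0 * s / (D0 + 1))"
  have t3: "t / t0 \<le> s / (D0 + 1)"
  proof -
    have "t \<le> t0 * (s / (D0 + 1))" by (simp add: t_def)
    hence "t / t0 \<le> (t0 * (s/(D0+1))) / t0" using 0(1) by (intro divide_right_mono) auto
    thus ?thesis using 0(1) by simp
  qed
  have "0 < t0 * (s / (D0 + 1))" using 0(1) s D0 by simp
  hence t: "0 < t" "t \<le> t0" "t / t0 \<le> s / (D0 + 1)"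
    using 0(1) t3 by (auto simp: t_def)
  have trm: "\<bar>d \<alpha>\<bar> * t^deg \<alpha> \<le> (t/t0) * (\<bar>d \<alpha>\<bar> * t0^deg \<alpha>)" for \<alpha>
  proof (cases "\<alpha> = (\<lambda>k. 0)")
    case True then show ?thesis by (simp add: d_def)
  next
    case False
    then have "deg \<alpha> \<ge> 1" using deg_zero_iff[of \<alpha>] by linarith
    have q: "0 \<le> t/t0" "t/t0 \<le> 1" using t 0(1) by auto
    have "t^deg \<alpha> = (t/t0)^deg \<alpha> * t0^deg \<alpha>" using 0(1) by (simp add: power_divide)
    also have "\<dots> \<le> (t/t0)^1 * t0^deg \<alpha>"
      by (intro mult_right_mono power_decreasing) (use q \<open>deg \<alpha> \<ge> 1\<close> 0(1) in auto)
    finally have "t^deg \<alpha> \<le> (t/t0) * t0^deg \<alpha>" by simp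
    from mult_left_mono[OF this abs_ge_zero[of "d \<alpha>"]] show ?thesis by (simp add: mult_ac)
  qed
  have dst: "(\<lambda>\<alpha>. \<bar>d \<alpha>\<bar> * t^deg \<alpha>) summable_on UNIV"
    by (rule summable_t_mono[OF ds0]) (use t in auto)
  define DT where "DT = infsum (\<lambda>\<alpha>. \<bar>d \<alpha>\<bar> * t^deg \<alpha>) UNIV"
  have DT0: "0 \<le> DT" unfolding DT_def by (rule infsum_nonneg) (use t in auto)
  have "DT \<le> infsum (\<lambda>\<alpha>. (t/t0) * (\<bar>d \<alpha>\<bar> * t0^deg \<alpha>)) UNIV"
    unfolding DT_def by (rule infsum_mono[OF dst summable_on_cmult_right[OF ds0] trm])
  also have "\<dots> = (t/t0) * D0" unfolding D0_def by (rule infsum_cmult_right[OF ds0])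
  also have "\<dots> \<le> s / (D0+1) * D0" by (rule mult_right_mono[OF t(3) D0])
  also have "\<dots> \<le> s" using D0 s by (simp add: field_simps)
  finally have DTs: "DT \<le> s" .
  have dth: "((\<lambda>\<alpha>. \<bar>d \<alpha>\<bar> * t^deg \<alpha>) has_sum DT) UNIV" using dst by (simp add: DT_def)
  define M where "M xs = \<bar>b (length xs)\<bar> * prod_list (map (\<lambda>\<alpha>. \<bar>d \<alpha>\<bar> * t^deg \<alpha>) xs)" for xs
  have Mfib: "((\<lambda>xs. M xs) has_sum \<bar>b n\<bar> * DT^n) {xs. length xs = n}" for n
  proof -
    have "((\<lambda>xs. \<bar>b n\<bar> * prod_list (map (\<lambda>\<alpha>. \<bar>d \<alpha>\<bar> * t^deg \<alpha>) xs)) has_sum \<bar>b n\<bar> * DT^n) {xs. length xs = n}"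
      by (rule has_sum_cmult_right[OF has_sum_lists_pow[OF dth]])
    then show ?thesis by (rule has_sum_cong[THEN iffD1, rotated]) (auto simp: M_def)
  qed
  have bDT: "(\<lambda>n. \<bar>b n\<bar> * DT^n) summable_on UNIV"
  proof -
    have "summable (\<lambda>n. \<bar>b n\<bar> * DT^n)" using bsum[of DT] DT0 DTs s by auto
    moreover have "\<bar>\<bar>b n\<bar> * DT^n\<bar> = \<bar>b n\<bar> * DT^n" for n using DT0 by simp
    ultimately have "((\<lambda>n. \<bar>b n\<bar> * DT^n) has_sum (\<Sum>n. \<bar>b n\<bar> * DT^n)) UNIV"
      by (intro sums_has_sum_real) (auto simp: summable_sums)
    then show ?thesis by (rule has_sum_imp_summable)
  qed
  have Msum: "M summable_on UNIV"
    unfolding lists_reidx_summable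
    by (rule summable_on_SigmaI[OF _ bDT]) (use Mfib t in \<open>auto simp: M_def intro!: prod_list_nonneg_map mult_nonneg_nonneg\<close>)
  define c' where "c' xs = b (length xs) * prod_list (map d xs)" for xs
  show ?thesis
  proof (rule ps_group[where I="UNIV :: (3\<Rightarrow>nat) list set" and c=c' and p=lsum and t=t and e="min e0 t"])
    have "\<bar>c' xs\<bar> * t ^ deg (lsum xs) = M xs" for xs
      unfolding c'_def M_def pow_deg_lsum abs_mult prod_list_map_abs prod_list_map_mult by simp
    then show "(\<lambda>i. \<bar>c' i\<bar> * t ^ deg (lsum i)) summable_on UNIV" using Msum by simp
  next
    fix x assume x: "x \<in> ball a (min e0 t)"
    define U where "U = h x - y0"
    define u where "u \<alpha> = d \<alpha> * mnm (x-a) \<alpha>" for \<alpha>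
    have uh: "(u has_sum U) UNIV" unfolding u_def U_def using dx x by auto
    have "dist a x < t" using x by simp
    hence nxa: "norm (x-a) < t" by (metis dist_norm dist_commute)
    have comp: "\<bar>(x-a)$k\<bar> \<le> t" for k
      using comp_le_norm[of "x-a" k] nxa by linarith
    have ub: "\<bar>u \<alpha>\<bar> \<le> \<bar>d \<alpha>\<bar> * t^deg \<alpha>" for \<alpha>
      unfolding u_def abs_mult by (rule mult_left_mono[OF mnm_bound[OF comp]]) auto
    have "\<bar>U\<bar> \<le> infsum (\<lambda>\<alpha>. \<bar>u \<alpha>\<bar>) UNIV"
      using norm_infsum_bound[of u UNIV] uh real_summable_abs[OF has_sum_imp_summable[OF uh]] by (simp add: infsumI)
    also have "\<dots> \<le> DT" unfolding DT_def
      by (rule infsum_mono[OF real_summable_abs[OF has_sum_imp_summable[OF uh]] dst ub])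
    finally have UDT: "\<bar>U\<bar> \<le> DT" .
    have gs: "(\<lambda>n. b n * U^n) sums g (h x)"
      using gser[of "h x"] UDT DTs s by (auto simp: U_def y0_def)
    have "summable (\<lambda>n. \<bar>b n\<bar> * \<bar>U\<bar>^n)" using bsum[of "\<bar>U\<bar>"] UDT DTs s by auto
    hence gh: "((\<lambda>n. b n * U^n) has_sum g (h x)) UNIV"
      by (intro sums_has_sum_real[OF _ gs]) (simp add: abs_mult power_abs)
    have fib: "((\<lambda>xs. c' xs * mnm (x-a) (lsum xs)) has_sum b n * U^n) {xs. length xs = n}" for n
    proof -
      have "((\<lambda>xs. b n * prod_list (map u xs)) has_sum b n * U^n) {xs. length xs = n}"
        by (rule has_sum_cmult_right[OF has_sum_lists_pow[OF uh]])
      then show ?thesis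
        by (rule has_sum_cong[THEN iffD1, rotated]) (auto simp: c'_def u_def[abs_def] mnm_lsum prod_list_map_mult)
    qed
    have "(\<lambda>xs. norm (c' xs * mnm (x-a) (lsum xs))) summable_on UNIV"
    proof (rule summable_on_comparison_test[OF Msum])
      fix xs :: "(3\<Rightarrow>nat) list"
      have "\<bar>mnm (x-a) (lsum xs)\<bar> \<le> t ^ deg (lsum xs)" by (rule mnm_bound[OF comp])
      hence "\<bar>c' xs\<bar> * \<bar>mnm (x-a) (lsum xs)\<bar> \<le> \<bar>c' xs\<bar> * t ^ deg (lsum xs)"
        by (rule mult_left_mono) auto
      also have "\<bar>c' xs\<bar> * t ^ deg (lsum xs) = M xs"
        unfolding c'_def M_def pow_deg_lsum abs_mult prod_list_map_abs prod_list_map_mult by simp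
      finally show "norm (c' xs * mnm (x-a) (lsum xs)) \<le> M xs" by (simp add: abs_mult)
    qed auto
    hence sm: "(\<lambda>xs. c' xs * mnm (x-a) (lsum xs)) summable_on UNIV" by (rule abs_summable_summable)
    have "((\<lambda>(n,xs). c' xs * mnm (x-a) (lsum xs)) has_sum g (h x)) (Sigma UNIV (\<lambda>n. {xs. length xs = n}))"
      by (rule has_sum_SigmaI[OF _ gh]) (use fib sm[unfolded lists_reidx_summable] in auto)
    then show "((\<lambda>i. c' i * mnm (x - a) (lsum i)) has_sum g (h x)) UNIV"
      unfolding lists_reidx .
  qed (use t 0 in auto)
qed

lemma ps_binom:
  fixes h :: "real^3 \<Rightarrow> real" and g :: "real \<Rightarrow> real"
  assumes h: "ps h a" and h0: "h a \<noteq> 0"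
   and geq: "\<And>y. \<bar>y - h a\<bar> < \<bar>h a\<bar> \<Longrightarrow> g y = C * (1 + (y - h a)/h a) powr p"
  shows "ps (\<lambda>x. g (h x)) a"
proof (rule ps_compose[OF h, where R="\<bar>h a\<bar>" and b="\<lambda>n. C * (p gchoose n) / (h a)^n"])
  show "0 < \<bar>h a\<bar>" using h0 by simp
next
  fix s :: real assume s: "0 \<le> s" "s < \<bar>h a\<bar>"
  define z where "z = s / \<bar>h a\<bar>"
  have z: "0 \<le> z" "z < 1" using s h0 by (auto simp: z_def)
  define w where "w = (z + 1)/2"
  have w: "z < w" "w < 1" "0 \<le> w" using z by (auto simp: w_def)
  have "summable (\<lambda>n. (p gchoose n) * w^n)"
    using gen_binomial_real[of w p] w by (auto simp: sums_iff)
  from powser_insidea[OF this, of z] w z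
  have "summable (\<lambda>n. norm ((p gchoose n) * z^n))" by simp
  hence "summable (\<lambda>n. \<bar>C\<bar> * norm ((p gchoose n) * z^n))" by (rule summable_mult)
  moreover have "\<bar>C * (p gchoose n) / (h a)^n\<bar> * s^n = \<bar>C\<bar> * norm ((p gchoose n) * z^n)" for n
    using h0 z by (simp add: z_def abs_mult power_divide power_abs)
  ultimately show "summable (\<lambda>n. \<bar>C * (p gchoose n) / (h a)^n\<bar> * s^n)" by simp
next
  fix y assume y: "\<bar>y - h a\<bar> < \<bar>h a\<bar>"
  define z where "z = (y - h a) / h a"
  have z: "\<bar>z\<bar> < 1" using y h0 by (simp add: z_def abs_divide)
  have "(\<lambda>n. C * ((p gchoose n) * z^n)) sums (C * (1 + z) powr p)"
    by (rule sums_mult[OF gen_binomial_real[OF z]])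
  moreover have "C * ((p gchoose n) * z^n) = C * (p gchoose n) / (h a)^n * (y - h a)^n" for n
    by (simp add: z_def power_divide)
  ultimately show "(\<lambda>n. C * (p gchoose n) / (h a)^n * (y - h a)^n) sums g y"
    using geq[OF y] by (simp add: z_def)
qed

lemma ps_sqrt:
  assumes h: "ps h a" and h0: "h a > 0"
  shows "ps (\<lambda>x. sqrt (h x)) a"
proof (rule ps_binom[OF h, where C="sqrt (h a)" and p="1/2"])
  fix y assume y: "\<bar>y - h a\<bar> < \<bar>h a\<bar>"
  define u where "u = (y - h a)/h a"
  have u: "1 + u > 0" "y = h a * (1 + u)" using y h0 by (auto simp: u_def field_simps abs_less_iff)
  have "sqrt y = sqrt (h a) * sqrt (1 + u)" using u by (simp add: real_sqrt_mult)
  also have "sqrt (1 + u) = (1 + u) powr (1/2)" using u by (simp add: powr_half_sqrt)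
  finally show "sqrt y = sqrt (h a) * (1 + (y - h a) / h a) powr (1/2)" by (simp add: u_def)
qed (use h0 in auto)

lemma ps_inverse:
  assumes h: "ps h a" and h0: "h a \<noteq> 0"
  shows "ps (\<lambda>x. 1 / h x) a"
proof (rule ps_binom[OF h h0, where C="1 / h a" and p="-1"])
  fix y assume y: "\<bar>y - h a\<bar> < \<bar>h a\<bar>"
  define u where "u = (y - h a)/h a"
  have u: "1 + u > 0" "y = h a * (1 + u)"
  proof -
    have "\<bar>u\<bar> < 1" using y h0 by (simp add: u_def abs_divide)
    then show "1 + u > 0" by simp
    show "y = h a * (1 + u)" using h0 by (simp add: u_def field_simps)
  qed
  have pw: "(1 + u) powr (-1) = 1 / (1 + u)" using u by (simp add: powr_minus divide_inverse)
  have e: "1 + (y - h a) / h a = 1 + u" by (simp add: u_def)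
  show "1 / y = 1 / h a * (1 + (y - h a) / h a) powr (-1)" unfolding e pw by (subst u(2)) simp
qed

lemma ps_inv_sqrt_abs:
  assumes h: "ps h a" and h0: "h a \<noteq> 0"
  shows "ps (\<lambda>x. 1 / sqrt \<bar>h x\<bar>) a"
proof (rule ps_binom[OF h h0, where C="1 / sqrt \<bar>h a\<bar>" and p="-1/2"])
  fix y assume y: "\<bar>y - h a\<bar> < \<bar>h a\<bar>"
  define u where "u = (y - h a)/h a"
  have u: "1 + u > 0" "y = h a * (1 + u)"
  proof -
    have "\<bar>u\<bar> < 1" using y h0 by (simp add: u_def abs_divide)
    then show "1 + u > 0" by simp
    show "y = h a * (1 + u)" using h0 by (simp add: u_def field_simps)
  qed
  have ay: "\<bar>y\<bar> = \<bar>h a\<bar> * (1 + u)" using u by (simp add: abs_mult)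
  have pw: "(1 + u) powr (-1/2) = 1 / sqrt (1 + u)"
    using u by (simp add: powr_minus_divide powr_half_sqrt)
  have e: "1 + (y - h a) / h a = 1 + u" by (simp add: u_def)
  show "1 / sqrt \<bar>y\<bar> = 1 / sqrt \<bar>h a\<bar> * (1 + (y - h a) / h a) powr (-1/2)"
    unfolding e pw ay using u by (simp add: real_sqrt_mult)
qed

definition Qj :: "3 \<Rightarrow> real^3 \<Rightarrow> (3\<Rightarrow>nat) \<Rightarrow> real" where
  "Qj j v \<alpha> = (\<Prod>k\<in>UNIV-{j}. (v$k)^(\<alpha> k))"

definition dq :: "3 \<Rightarrow> (3\<Rightarrow>nat) \<Rightarrow> nat" where
  "dq j \<alpha> = (\<Sum>k\<in>UNIV-{j}. \<alpha> k)"

lemma mnm_split: "mnm v \<alpha> = (v$j)^(\<alpha> j) * Qj j v \<alpha>"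
  unfolding mnm_def Qj_def by (rule prod.remove) auto

lemma deg_split: "deg \<alpha> = \<alpha> j + dq j \<alpha>"
  unfolding deg_def dq_def by (rule sum.remove) auto

lemma Qj_upd[simp]: "Qj j v (\<alpha>(j:=m)) = Qj j v \<alpha>"
  unfolding Qj_def by (rule prod.cong) auto

lemma dq_upd[simp]: "dq j (\<alpha>(j:=m)) = dq j \<alpha>"
  unfolding dq_def by (rule sum.cong) auto

lemma axis_comp: "(v + s *\<^sub>R axis j (1::real))$k = (if k = j then v$k + s else v$k)"
  by (simp add: axis_def)

lemma Qj_axis[simp]: "Qj j (v + s *\<^sub>R axis j 1) \<alpha> = Qj j v \<alpha>"
  unfolding Qj_def by (rule prod.cong) (auto simp: axis_def)

lemma Qj_bound:
  assumes "\<And>k. \<bar>v$k\<bar> \<le> t"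
  shows "\<bar>Qj j v \<alpha>\<bar> \<le> t^(dq j \<alpha>)"
proof -
  have "\<bar>Qj j v \<alpha>\<bar> = (\<Prod>k\<in>UNIV-{j}. \<bar>v$k\<bar>^(\<alpha> k))"
    by (simp add: Qj_def abs_prod power_abs)
  also have "\<dots> \<le> (\<Prod>k\<in>UNIV-{j}. t^(\<alpha> k))"
    by (intro prod_mono conjI power_mono assms) auto
  also have "\<dots> = t^dq j \<alpha>" by (simp add: dq_def power_sum)
  finally show ?thesis .
qed

lemma nat_le_pow2: "n \<ge> 1 \<Longrightarrow> n \<le> (2::nat)^(n-1)"
proof (induction n)
  case (Suc n)
  show ?case
  proof (cases "n = 0")
    case False
    then have "n \<le> 2^(n-1)" using Suc by auto
    moreover have "2^n = 2 * (2::nat)^(n-1)" using False by (metis Suc_pred' neq0_conv power_Suc)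
    moreover have "(1::nat) \<le> 2^(n-1)" by simp
    ultimately have "Suc n \<le> 2^n" by linarith
    then show ?thesis by simp
  qed simp
qed simp

lemma n_half_pow: 
  assumes "n \<ge> 1" "0 \<le> t"
  shows "real n * (t/2)^(n-1) \<le> t^(n-1)"
proof -
  have "real n \<le> 2^(n-1)" using nat_le_pow2[OF assms(1)] by (metis of_nat_le_iff of_nat_numeral of_nat_power)
  hence "real n * (t/2)^(n-1) \<le> 2^(n-1) * (t/2)^(n-1)"
    by (rule mult_right_mono) (use assms in auto)
  also have "\<dots> = t^(n-1)" by (simp add: power_divide)
  finally show ?thesis .
qed

lemma binom_has_sum:
  fixes w s :: real
  shows "((\<lambda>i. of_nat (m choose i) * w^(m - i) * s^i) has_sum (w + s)^m) UNIV"
proof (rule has_sum_cong_neutral[where S="{..m}" and T=UNIV, THEN iffD1])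
  have "(w + s)^m = (\<Sum>i\<le>m. of_nat (m choose i) * s^i * w^(m-i))"
    using binomial_ring[of s w m] by (simp add: add.commute)
  then show "((\<lambda>i. of_nat (m choose i) * w^(m - i) * s^i) has_sum (w + s)^m) {..m}"
    using has_sum_finite[of "{..m}" "\<lambda>i. of_nat (m choose i) * w^(m - i) * s^i"] by (simp add: mult_ac)
qed (auto simp: binomial_eq_0)

lemma ps_pd:
  assumes "ps f a"
  shows "\<exists>e>0. \<exists>D. ps D a \<and> (\<forall>x\<in>ball a e. ((\<lambda>s. f (x + s *\<^sub>R axis j 1)) has_field_derivative D x) (at 0))"
proof -
  obtain c t0 e0 where 0: "0<(t0::real)" "0<(e0::real)" "(\<lambda>\<alpha>. \<bar>c \<alpha>\<bar> * t0^deg \<alpha>) summable_on UNIV"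
      "\<forall>x\<in>ball a e0. ((\<lambda>\<alpha>. c \<alpha> * mnm (x-a) \<alpha>) has_sum f x) UNIV"
    using assms unfolding ps_def by blast
  define r0 where "r0 = min e0 t0"
  have r0: "0 < r0" "r0 \<le> e0" "r0 \<le> t0" using 0 by (auto simp: r0_def)
  define cd where "cd \<alpha> = c \<alpha> * of_nat (\<alpha> j)" for \<alpha>
  define pj where "pj \<alpha> = \<alpha>(j := \<alpha> j - 1)" for \<alpha> :: "3\<Rightarrow>nat"
  define D where "D x = infsum (\<lambda>\<alpha>. cd \<alpha> * mnm (x-a) (pj \<alpha>)) UNIV" for x
  have majD: "(\<lambda>\<alpha>. \<bar>cd \<alpha>\<bar> * (t0/2)^deg (pj \<alpha>)) summable_on UNIV"
  proof (rule summable_on_comparison_test[OF summable_on_cmult_left[OF 0(3), of "1/t0"]])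
    fix \<alpha> :: "3\<Rightarrow>nat"
    show "\<bar>cd \<alpha>\<bar> * (t0/2)^deg (pj \<alpha>) \<le> \<bar>c \<alpha>\<bar> * t0^deg \<alpha> * (1/t0)"
    proof (cases "\<alpha> j = 0")
      case True then show ?thesis using 0 by (simp add: cd_def)
    next
      case False
      have dp: "deg (pj \<alpha>) = deg \<alpha> - 1"
        using deg_split[of "pj \<alpha>" j] deg_split[of \<alpha> j] False by (simp add: pj_def)
      have n1: "deg \<alpha> \<ge> 1" "\<alpha> j \<le> deg \<alpha>" using deg_split[of \<alpha> j] False by auto
      have "real (\<alpha> j) * (t0/2)^(deg \<alpha> - 1) \<le> real (deg \<alpha>) * (t0/2)^(deg \<alpha> - 1)"
        using n1 0 by (intro mult_right_mono) auto
      also have "\<dots> \<le> t0^(deg \<alpha> - 1)" by (rule n_half_pow) (use n1 0 in auto)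
      also have "\<dots> = t0^deg \<alpha> * (1/t0)"
        using n1 0 by (simp add: power_diff)
      finally have "real (\<alpha> j) * (t0/2)^(deg \<alpha> - 1) \<le> t0^deg \<alpha> * (1/t0)" .
      from mult_left_mono[OF this abs_ge_zero[of "c \<alpha>"]]
      show ?thesis by (simp add: cd_def dp abs_mult mult_ac)
    qed
  qed (use 0 in auto)
  have Dhs: "((\<lambda>\<alpha>. cd \<alpha> * mnm (x-a) (pj \<alpha>)) has_sum D x) UNIV" if "norm (x-a) < t0/2" for x
  proof -
    have comp: "\<bar>(x-a)$k\<bar> \<le> t0/2" for k using comp_le_norm[of "x-a" k] that by linarith
    have "(\<lambda>\<alpha>. norm (cd \<alpha> * mnm (x-a) (pj \<alpha>))) summable_on UNIV"
    proof (rule summable_on_comparison_test[OF majD])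
      fix \<alpha> show "norm (cd \<alpha> * mnm (x-a) (pj \<alpha>)) \<le> \<bar>cd \<alpha>\<bar> * (t0/2)^deg (pj \<alpha>)"
        unfolding real_norm_def abs_mult by (rule mult_left_mono[OF mnm_bound[OF comp]]) auto
    qed auto
    then have "(\<lambda>\<alpha>. cd \<alpha> * mnm (x-a) (pj \<alpha>)) summable_on UNIV" by (rule abs_summable_summable)
    then show ?thesis unfolding D_def by simp
  qed
  have psD: "ps D a"
  proof (rule ps_group[where I=UNIV and c=cd and p=pj and t="t0/2" and e="t0/2"])
    fix x assume "x \<in> ball a (t0/2)"
    then have "norm (x-a) < t0/2" by (metis dist_norm dist_commute mem_ball)
    then show "((\<lambda>\<alpha>. cd \<alpha> * mnm (x-a) (pj \<alpha>)) has_sum D x) UNIV" by (rule Dhs)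
  qed (use 0 majD in auto)
  define e where "e = r0/4"
  have "\<forall>x\<in>ball a e. ((\<lambda>s. f (x + s *\<^sub>R axis j 1)) has_field_derivative D x) (at 0)"
  proof
    fix x assume x: "x \<in> ball a e"
    define v where "v = x - a"
    have "dist a x < r0/4" using x by (simp add: e_def)
    hence nv: "norm v < r0/4" unfolding v_def by (metis dist_norm dist_commute)
    have compv: "\<bar>v$k\<bar> < r0/4" for k using comp_le_norm[of v k] nv by linarith
    define T where "T s = (\<lambda>(\<alpha>,i). c \<alpha> * Qj j v \<alpha> * of_nat (\<alpha> j choose i) * (v$j)^(\<alpha> j - i) * s^i)" for s :: real
    have Tabs: "(\<lambda>p. \<bar>T s p\<bar>) summable_on UNIV \<times> UNIV" if s: "\<bar>s\<bar> \<le> r0/4" for s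
    proof -
      define g where "g \<alpha> = \<bar>c \<alpha>\<bar> * \<bar>Qj j v \<alpha>\<bar> * (\<bar>v$j\<bar> + \<bar>s\<bar>)^(\<alpha> j)" for \<alpha>
      have fib: "((\<lambda>i. \<bar>T s (\<alpha>,i)\<bar>) has_sum g \<alpha>) UNIV" for \<alpha>
      proof -
        have "((\<lambda>i. (\<bar>c \<alpha>\<bar> * \<bar>Qj j v \<alpha>\<bar>) * (of_nat (\<alpha> j choose i) * \<bar>v$j\<bar>^(\<alpha> j - i) * \<bar>s\<bar>^i)) has_sum
               (\<bar>c \<alpha>\<bar> * \<bar>Qj j v \<alpha>\<bar>) * (\<bar>v$j\<bar> + \<bar>s\<bar>)^(\<alpha> j)) UNIV"
          by (rule has_sum_cmult_right[OF binom_has_sum])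
        then show ?thesis unfolding g_def
          by (rule has_sum_cong[THEN iffD1, rotated]) (auto simp: T_def abs_mult power_abs mult_ac)
      qed
      have gs: "g summable_on UNIV"
      proof (rule summable_on_comparison_test[OF 0(3)])
        fix \<alpha> :: "3\<Rightarrow>nat"
        have q: "\<bar>Qj j v \<alpha>\<bar> \<le> t0^dq j \<alpha>"
        proof (rule Qj_bound)
          fix k show "\<bar>v$k\<bar> \<le> t0" using compv[of k] r0 by linarith
        qed
        have w: "(\<bar>v$j\<bar> + \<bar>s\<bar>)^(\<alpha> j) \<le> t0^(\<alpha> j)"
          by (rule power_mono) (use compv[of j] s r0 in auto)
        have "\<bar>Qj j v \<alpha>\<bar> * (\<bar>v$j\<bar> + \<bar>s\<bar>)^(\<alpha> j) \<le> t0^dq j \<alpha> * t0^(\<alpha> j)"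
          by (rule mult_mono[OF q w]) (use 0 in auto)
        also have "\<dots> = t0^deg \<alpha>" using deg_split[of \<alpha> j] by (simp add: power_add)
        finally have "\<bar>c \<alpha>\<bar> * (\<bar>Qj j v \<alpha>\<bar> * (\<bar>v$j\<bar> + \<bar>s\<bar>)^(\<alpha> j)) \<le> \<bar>c \<alpha>\<bar> * t0^deg \<alpha>"
          by (rule mult_left_mono) auto
        then show "g \<alpha> \<le> \<bar>c \<alpha>\<bar> * t0^deg \<alpha>" by (simp add: g_def mult_ac)
      qed (auto simp: g_def)
      have "(\<lambda>(\<alpha>,i). \<bar>T s (\<alpha>,i)\<bar>) summable_on Sigma UNIV (\<lambda>_. UNIV)"
        by (rule summable_on_SigmaI[OF _ gs]) (use fib in auto)
      then show ?thesis by (simp add: case_prod_unfold)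
    qed
    have Tsum: "(T s) summable_on UNIV \<times> UNIV" if "\<bar>s\<bar> \<le> r0/4" for s
      using abs_summable_summable[of "T s"] Tabs[OF that] by simp
    have Fhs: "((T s) has_sum f (x + s *\<^sub>R axis j 1)) (UNIV \<times> UNIV)" if s: "\<bar>s\<bar> \<le> r0/4" for s
    proof -
      have "norm (v + s *\<^sub>R axis j 1) \<le> norm v + norm (s *\<^sub>R axis j (1::real))" by (rule norm_triangle_ineq)
      also have "norm (s *\<^sub>R axis j (1::real)) = \<bar>s\<bar>" by simp
      finally have nrm: "norm (v + s *\<^sub>R axis j 1) < e0" using nv s r0 by linarith
      have eqv: "x + s *\<^sub>R axis j 1 - a = v + s *\<^sub>R axis j 1" by (simp add: v_def algebra_simps)
      have "dist (x + s *\<^sub>R axis j 1) a < e0" using nrm by (simp only: dist_norm eqv)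
      then have inb: "x + s *\<^sub>R axis j 1 \<in> ball a e0" by (metis dist_commute mem_ball)
      have hs: "((\<lambda>\<alpha>. c \<alpha> * mnm (v + s *\<^sub>R axis j 1) \<alpha>) has_sum f (x + s *\<^sub>R axis j 1)) UNIV"
        using 0(4)[rule_format, OF inb] by (simp add: v_def algebra_simps)
      have fib: "((\<lambda>i. T s (\<alpha>,i)) has_sum c \<alpha> * mnm (v + s *\<^sub>R axis j 1) \<alpha>) UNIV" for \<alpha>
      proof -
        have hh: "((\<lambda>i. (c \<alpha> * Qj j v \<alpha>) * (of_nat (\<alpha> j choose i) * (v$j)^(\<alpha> j - i) * s^i)) has_sum
               (c \<alpha> * Qj j v \<alpha>) * (v$j + s)^(\<alpha> j)) UNIV"
          by (rule has_sum_cmult_right[OF binom_has_sum])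
        have eq: "(c \<alpha> * Qj j v \<alpha>) * (v$j + s)^(\<alpha> j) = c \<alpha> * mnm (v + s *\<^sub>R axis j 1) \<alpha>"
          using mnm_split[of "v + s *\<^sub>R axis j 1" \<alpha> j] by (simp add: axis_comp)
        show ?thesis using hh unfolding eq
          by (rule has_sum_cong[THEN iffD1, rotated]) (simp add: T_def mult_ac)
      qed
      show ?thesis
        by (rule has_sum_SigmaI[where g="\<lambda>\<alpha>. c \<alpha> * mnm (v + s *\<^sub>R axis j 1) \<alpha>", OF _ hs, unfolded UNIV_Times_UNIV])
           (use fib Tsum[OF s] in \<open>auto simp: case_prod_unfold\<close>)
    qed
    define K where "K = r0/8"
    have K: "0 < K" "K < r0/4" using r0 by (auto simp: K_def)
    define E where "E i = infsum (\<lambda>\<alpha>. T K (\<alpha>,i)) UNIV / K^i" for i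
    have Ksm: "(\<lambda>\<alpha>. T K (\<alpha>,i)) summable_on UNIV" for i
    proof -
      have "(\<lambda>(i,\<alpha>). T K (\<alpha>,i)) summable_on UNIV \<times> UNIV"
        using Tsum[of K] K summable_on_swap[of "T K" UNIV UNIV] by simp
      from summable_on_SigmaD1[OF this[unfolded UNIV_Times_UNIV[symmetric]]] show ?thesis by auto
    qed
    have Efib: "((\<lambda>\<alpha>. T s (\<alpha>,i)) has_sum E i * s^i) UNIV" for s i
    proof -
      have "((\<lambda>\<alpha>. T K (\<alpha>,i) * (s^i / K^i)) has_sum infsum (\<lambda>\<alpha>. T K (\<alpha>,i)) UNIV * (s^i / K^i)) UNIV"
        by (rule has_sum_cmult_left) (use Ksm in auto)
      moreover have "T K (\<alpha>,i) * (s^i / K^i) = T s (\<alpha>,i)" for \<alpha> using K by (simp add: T_def)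
      ultimately show ?thesis by (simp add: E_def)
    qed
    have Eser: "((\<lambda>i. E i * s^i) has_sum f (x + s *\<^sub>R axis j 1)) UNIV" if s: "\<bar>s\<bar> \<le> r0/4" for s
    proof -
      have "((\<lambda>(i,\<alpha>). T s (\<alpha>,i)) has_sum f (x + s *\<^sub>R axis j 1)) (UNIV \<times> UNIV)"
        by (rule has_sum_swap[THEN iffD1, OF Fhs[OF s]])
      from has_sum_SigmaD[OF this[unfolded UNIV_Times_UNIV[symmetric]]] Efib show ?thesis by auto
    qed
    have Fser: "f (x + s *\<^sub>R axis j 1) = (\<Sum>i. E i * s^i)" if "\<bar>s\<bar> < r0/4" for s
      using has_sum_imp_sums[OF Eser] that by (simp add: sums_iff)
    have "summable (\<lambda>i. E i * K^i)" using has_sum_imp_sums[OF Eser, of K] K by (auto simp: sums_iff)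
    from termdiffs_strong[OF this, of 0] K
    have "((\<lambda>s. \<Sum>i. E i * s^i) has_field_derivative E 1) (at 0)" by (simp add: diffs_def)
    then have deriv: "((\<lambda>s. f (x + s *\<^sub>R axis j 1)) has_field_derivative E 1) (at 0)"
      by (rule has_field_derivative_transform_within_open[where S="ball 0 (r0/4)"])
         (use r0 Fser in auto)
    have "E 1 = D x"
    proof -
      have h1: "((\<lambda>\<alpha>. T K (\<alpha>,1)) has_sum E 1 * K) UNIV" using Efib[of K 1] by simp
      have "norm (x - a) < t0/2" using nv r0 by (simp add: v_def)
      from has_sum_cmult_left[OF Dhs[OF this], of K]
      have h2: "((\<lambda>\<alpha>. cd \<alpha> * mnm (x-a) (pj \<alpha>) * K) has_sum D x * K) UNIV" .
      have "T K (\<alpha>,1) = cd \<alpha> * mnm (x-a) (pj \<alpha>) * K" for \<alpha>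
        using mnm_split[of "x-a" "pj \<alpha>" j] by (simp add: T_def cd_def pj_def v_def mult_ac)
      with h1 h2 have "E 1 * K = D x * K" using has_sum_unique by fastforce
      then show ?thesis using K by simp
    qed
    with deriv show "((\<lambda>s. f (x + s *\<^sub>R axis j 1)) has_field_derivative D x) (at 0)" by simp
  qed
  moreover have "e > 0" using r0 by (simp add: e_def)
  ultimately show ?thesis using psD by blast
qed

abbreviation ra where "ra f U \<equiv> real_analytic_on f U"

lemma ra_const: "ra (\<lambda>x. k) U" unfolding real_analytic_ps using ps_const by blast
lemma ra_coord: "ra (\<lambda>x. x$j) U" unfolding real_analytic_ps using ps_coord by blast
lemma ra_add: "ra f U \<Longrightarrow> ra g U \<Longrightarrow> ra (\<lambda>x. f x + g x) U"
  unfolding real_analytic_ps by (intro ballI, rule ps_add) auto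
lemma ra_diff: "ra f U \<Longrightarrow> ra g U \<Longrightarrow> ra (\<lambda>x. f x - g x) U"
  unfolding real_analytic_ps by (intro ballI, rule ps_diff) auto
lemma ra_mult: "ra f U \<Longrightarrow> ra g U \<Longrightarrow> ra (\<lambda>x. f x * g x) U"
  unfolding real_analytic_ps by (intro ballI, rule ps_mult) auto
lemma ra_minus: "ra f U \<Longrightarrow> ra (\<lambda>x. - f x) U"
  unfolding real_analytic_ps by (intro ballI, rule ps_minus) auto
lemma ra_sum: "finite S \<Longrightarrow> (\<And>i. i\<in>S \<Longrightarrow> ra (f i) U) \<Longrightarrow> ra (\<lambda>x. \<Sum>i\<in>S. f i x) U"
  unfolding real_analytic_ps by (intro ballI, rule ps_sum) auto
lemma ra_prod: "finite S \<Longrightarrow> (\<And>i. i\<in>S \<Longrightarrow> ra (f i) U) \<Longrightarrow> ra (\<lambda>x. \<Prod>i\<in>S. f i x) U"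
  unfolding real_analytic_ps by (intro ballI, rule ps_prod) auto
lemma ra_sqrt: "ra f U \<Longrightarrow> (\<And>x. x\<in>U \<Longrightarrow> f x > 0) \<Longrightarrow> ra (\<lambda>x. sqrt (f x)) U"
  unfolding real_analytic_ps by (intro ballI, rule ps_sqrt) auto
lemma ra_inverse: "ra f U \<Longrightarrow> (\<And>x. x\<in>U \<Longrightarrow> f x \<noteq> 0) \<Longrightarrow> ra (\<lambda>x. 1 / f x) U"
  unfolding real_analytic_ps by (intro ballI, rule ps_inverse) auto
lemma ra_inv_sqrt_abs: "ra f U \<Longrightarrow> (\<And>x. x\<in>U \<Longrightarrow> f x \<noteq> 0) \<Longrightarrow> ra (\<lambda>x. 1 / sqrt \<bar>f x\<bar>) U"
  unfolding real_analytic_ps by (intro ballI, rule ps_inv_sqrt_abs) auto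

lemma ra_cong: "ra f U \<Longrightarrow> open U \<Longrightarrow> (\<And>x. x\<in>U \<Longrightarrow> f x = g x) \<Longrightarrow> ra g U"
  unfolding real_analytic_ps
proof
  fix a assume H: "\<forall>a\<in>U. ps f a" "open U" "\<And>x. x\<in>U \<Longrightarrow> f x = g x" "a \<in> U"
  then obtain d where d: "d > 0" "ball a d \<subseteq> U" using open_contains_ball by blast
  show "ps g a" by (rule ps_cong[of f a d]) (use H d in auto)
qed

lemma ra_pd:
  assumes "ra f U"
  shows "ra (pd f j) U" "\<And>x. x\<in>U \<Longrightarrow> ((\<lambda>s. f (x + s *\<^sub>R axis j 1)) has_field_derivative pd f j x) (at 0)"
proof -
  have *: "ps (pd f j) a \<and> ((\<lambda>s. f (a + s *\<^sub>R axis j 1)) has_field_derivative pd f j a) (at 0)" if "a \<in> U" for a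
  proof -
    have "ps f a" using assms that unfolding real_analytic_ps by blast
    from ps_pd[OF this, of j] obtain e D where e: "e > 0" "ps D a"
      "\<forall>x\<in>ball a e. ((\<lambda>s. f (x + s *\<^sub>R axis j 1)) has_field_derivative D x) (at 0)" by blast
    have eq: "pd f j x = D x" if "x \<in> ball a e" for x
      unfolding pd_def using e(3) that by (intro DERIV_imp_deriv) blast
    have "ps (pd f j) a" by (rule ps_cong[OF e(2) e(1)]) (use eq in auto)
    moreover have "((\<lambda>s. f (a + s *\<^sub>R axis j 1)) has_field_derivative pd f j a) (at 0)"
      using e(3) eq[of a] e(1) by auto
    ultimately show ?thesis ..
  qed
  show "ra (pd f j) U" unfolding real_analytic_ps using * by blast
  show "\<And>x. x\<in>U \<Longrightarrow> ((\<lambda>s. f (x + s *\<^sub>R axis j 1)) has_field_derivative pd f j x) (at 0)" using * by blast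
qed

lemma ra_det:
  assumes "\<And>i l. ra (\<lambda>x. A x $ i $ l) U"
  shows "ra (\<lambda>x. det (A x :: real^'n^'n)) U"
  unfolding det_def
proof (rule ra_sum)
  fix p :: "'n \<Rightarrow> 'n"
  show "ra (\<lambda>x. of_int (sign p) * (\<Prod>i\<in>UNIV. A x $ i $ p i)) U"
    by (rule ra_mult[OF ra_const ra_prod]) (simp_all add: assms)
qed (simp add: finite_permutations)

lemma invertible_matrix_inv:
  fixes A :: "real^'n^'n"
  assumes "invertible A"
  shows "A ** matrix_inv A = mat 1" "matrix_inv A ** A = mat 1"
proof -
  have "\<exists>A'. A ** A' = mat 1 \<and> A' ** A = mat 1" using assms unfolding invertible_def by blast
  from someI_ex[OF this] have "A ** matrix_inv A = mat 1 \<and> matrix_inv A ** A = mat 1"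
    unfolding matrix_inv_def .
  then show "A ** matrix_inv A = mat 1" "matrix_inv A ** A = mat 1" by simp_all
qed

lemma matrix_inv_cramer:
  fixes A :: "real^'n^'n"
  assumes "det A \<noteq> 0"
  shows "matrix_inv A *v b = (\<chi> k. det(\<chi> i j. if j=k then b$i else A$i$j) / det A)"
proof -
  have "invertible A" using assms invertible_det_nz by blast
  then have "A *v (matrix_inv A *v b) = b"
    by (simp add: matrix_vector_mul_assoc invertible_matrix_inv)
  then show ?thesis using cramer[OF assms] by blast
qed

lemma ra_matinv_apply:
  fixes A :: "real^3 \<Rightarrow> real^'n^'n"
  assumes "\<And>i l. ra (\<lambda>x. A x $ i $ l) U" "\<And>x. x\<in>U \<Longrightarrow> det (A x) \<noteq> 0"
    "\<And>i. ra (\<lambda>x. w x $ i) U" "open U"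
  shows "ra (\<lambda>x. (matrix_inv (A x) *v w x) $ k) U"
proof (rule ra_cong[OF _ assms(4)])
  show "ra (\<lambda>x. det (\<chi> i j. if j=k then w x$i else A x$i$j) * (1 / det (A x))) U"
  proof (rule ra_mult)
    show "ra (\<lambda>x. det (\<chi> i j. if j=k then w x$i else A x$i$j)) U"
    proof (rule ra_det)
      fix i l
      show "ra (\<lambda>x. (\<chi> i j. if j=k then w x$i else A x$i$j) $ i $ l) U"
      proof (cases "l = k")
        case True then show ?thesis by (simp add: assms)
      next
        case False then show ?thesis by (simp add: assms)
      qed
    qed
    show "ra (\<lambda>x. 1 / det (A x)) U" by (rule ra_inverse[OF ra_det]) (use assms in auto)
  qed
  fix x assume "x \<in> U"
  then show "det (\<chi> i j. if j=k then w x$i else A x$i$j) * (1 / det (A x)) = (matrix_inv (A x) *v w x) $ k"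
    using matrix_inv_cramer[of "A x" "w x"] assms(2) by simp
qed

lemma ra_mono: "ra f U \<Longrightarrow> V \<subseteq> U \<Longrightarrow> ra f V"
  unfolding real_analytic_ps by blast

lemma dnorm:
  fixes x :: "real^3"
  assumes "x \<noteq> 0"
  shows "((\<lambda>s. norm (x + s *\<^sub>R axis j 1)) has_field_derivative (x$j / norm x)) (at 0)"
proof -
  have d1: "((\<lambda>s. x + s *\<^sub>R axis j (1::real)) has_derivative (\<lambda>s. s *\<^sub>R axis j 1)) (at 0)"
    by (auto intro!: derivative_eq_intros)
  have d2: "((\<lambda>y. norm y) has_derivative (\<lambda>h. inner h (sgn x))) (at x)"
    using has_derivative_norm[OF assms] .
  have d2': "((\<lambda>y. norm y) has_derivative (\<lambda>h. inner h (sgn x))) (at (x + 0 *\<^sub>R axis j 1))"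
    using d2 by simp
  have "((\<lambda>s. norm (x + s *\<^sub>R axis j 1)) has_derivative (\<lambda>s. inner (s *\<^sub>R axis j 1) (sgn x))) (at 0)"
    using has_derivative_compose[OF d1 d2'] .
  then show ?thesis
    by (rule has_derivative_imp_has_field_derivative)
       (simp add: sgn_div_norm inner_axis' divide_inverse mult_ac)
qed

lemma det_nz_posdef:
  fixes A :: "real^3^3"
  assumes "\<forall>v. v \<noteq> 0 \<longrightarrow> v \<bullet> (A *v v) > 0"
  shows "det A \<noteq> 0"
proof
  assume "det A = 0"
  then have "\<not> invertible A" using invertible_det_nz by blast
  then have "\<not> (\<exists>B. B ** A = mat 1)" using invertible_left_inverse by blast
  then obtain v where "A *v v = 0" "v \<noteq> 0" using matrix_left_invertible_ker by blast
  then show False using assms by fastforce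
qed

lemma norm_sq_sum: "(norm (x::real^3))^2 = (\<Sum>k\<in>UNIV. x$k * x$k)"
  by (simp add: power2_norm_eq_inner inner_vec_def)

theorem mainTheorem4:
  fixes \<gamma> :: "real^3 \<Rightarrow> real^3^3"
    and \<Omega> f\<Omega> phiM phiS :: "real^3 \<Rightarrow> real"
    and \<rho> M :: real and S :: "real^3"
  assumes rho_pos: "\<rho> > 0"
    and gamma_analytic: "\<forall>j k. real_analytic_on (\<lambda>x. \<gamma> x $ j $ k) (ball 0 \<rho>)"
    and gamma_sym: "\<forall>x\<in>ball 0 \<rho>. transpose (\<gamma> x) = \<gamma> x"
    and gamma_posdef: "\<forall>x\<in>ball 0 \<rho>. \<forall>v. v \<noteq> 0 \<longrightarrow> v \<bullet> (\<gamma> x *v v) > 0"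
    and normal_origin: "\<gamma> 0 = mat 1"
    and normal_gauss: "\<forall>x\<in>ball 0 \<rho>. \<gamma> x *v x = x"
    and phiM_analytic: "real_analytic_on phiM (ball 0 \<rho>)"
    and phiS_analytic: "real_analytic_on phiS (ball 0 \<rho>)"
    and fOmega_analytic: "real_analytic_on f\<Omega> (ball 0 \<rho>)"
    and phiM_lead: "\<exists>C. \<forall>x\<in>ball 0 \<rho>. \<bar>phiM x - M\<bar> \<le> C * norm x"
    and phiS_lead: "\<exists>C. \<forall>x\<in>ball 0 \<rho>. \<bar>phiS x - S \<bullet> x\<bar> \<le> C * (norm x)\<^sup>2"
    and Omega_eq: "\<forall>x\<in>ball 0 \<rho>. \<Omega> x = (norm x)\<^sup>2 * f\<Omega> x"
    and fOmega_pos: "\<forall>x\<in>ball 0 \<rho>. f\<Omega> x > 0"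
    and fOmega_origin: "f\<Omega> 0 = 1"
  shows "\<exists>e>0. \<exists>H1 H2 :: real^3 \<Rightarrow> real^3. \<exists>H :: real^3 \<Rightarrow> real.
           (\<forall>i. real_analytic_on (\<lambda>x. H1 x $ i) (ball 0 e)) \<and>
           (\<forall>i. real_analytic_on (\<lambda>x. H2 x $ i) (ball 0 e)) \<and>
           real_analytic_on H (ball 0 e) \<and>
           (\<forall>x\<in>ball 0 e. x \<noteq> 0 \<longrightarrow>
              Jvec \<gamma> \<Omega> phiM phiS x
                = H1 x + (1 / norm x ^ 3) *\<^sub>R ((norm x)\<^sup>2 *\<^sub>R H2 x + H x *\<^sub>R x))"
proof -
  define U where "U = ball (0::real^3) \<rho>"
  have oU: "open U" by (simp add: U_def)
  have gam: "ra (\<lambda>x. \<gamma> x $ j $ k) U" for j k using gamma_analytic by (simp add: U_def)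
  have rM: "ra phiM U" and rS: "ra phiS U" and rO: "ra f\<Omega> U" using phiM_analytic phiS_analytic fOmega_analytic by (simp_all add: U_def)
  have detnz: "det (\<gamma> x) \<noteq> 0" if "x \<in> U" for x
    by (rule det_nz_posdef) (use gamma_posdef that in \<open>auto simp: U_def\<close>)
  have fpos: "f\<Omega> x > 0" if "x \<in> U" for x using fOmega_pos that by (simp add: U_def)
  have nsq: "ra (\<lambda>x. (norm x)^2) U"
    by (rule ra_cong[OF ra_sum[of UNIV "\<lambda>k x. x$k * x$k"] oU]) (auto intro: ra_mult ra_coord simp: norm_sq_sum)
  define Q where "Q x = (norm x)^2 * f\<Omega> x * (phiM x * phiM x + phiS x * phiS x) + 1/4" for x
  have rQ: "ra Q U" unfolding Q_def
    by (intro ra_add ra_mult ra_const nsq rO rM rS)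
  have Qpos: "Q x > 0" if "x \<in> U" for x
  proof -
    have "0 \<le> (norm x)^2 * f\<Omega> x * (phiM x * phiM x + phiS x * phiS x)"
      using fpos[OF that] by (intro mult_nonneg_nonneg) auto
    then show ?thesis by (simp add: Q_def)
  qed
  define F where "F x = sqrt (Q x) * (1 / sqrt \<bar>f\<Omega> x\<bar>)" for x
  have fnz: "f\<Omega> x \<noteq> 0" if "x \<in> U" for x using fpos[OF that] by simp
  have rF: "ra F U" unfolding F_def
    by (rule ra_mult[OF ra_sqrt[OF rQ Qpos] ra_inv_sqrt_abs[OF rO fnz]])
  have phiK_eq: "phiK \<Omega> phiM phiS x = F x / norm x" if "x \<in> U" for x
  proof -
    have O: "\<Omega> x = (norm x)^2 * f\<Omega> x" using Omega_eq that by (simp add: U_def)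
    have "\<Omega> x * ((phiM x)\<^sup>2 + (phiS x)\<^sup>2) + 1/4 = Q x" by (simp add: O Q_def power2_eq_square)
    moreover have "sqrt (\<Omega> x) = norm x * sqrt (f\<Omega> x)" by (simp add: O real_sqrt_mult)
    ultimately show ?thesis using fpos[OF that] by (simp add: phiK_def F_def)
  qed
  have dphiK: "pd (phiK \<Omega> phiM phiS) j x = pd F j x / norm x - F x * x$j / norm x ^ 3"
    if x: "x \<in> U" "x \<noteq> 0" for x j
  proof -
    have dF: "((\<lambda>s. F (x + s *\<^sub>R axis j 1)) has_field_derivative pd F j x) (at 0)"
      using ra_pd(2)[OF rF x(1)] .
    have dn: "((\<lambda>s. norm (x + s *\<^sub>R axis j 1)) has_field_derivative (x$j / norm x)) (at 0)"
      using dnorm[OF x(2)] .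
    have "((\<lambda>s. F (x + s *\<^sub>R axis j 1) / norm (x + s *\<^sub>R axis j 1)) has_field_derivative
        (pd F j x * norm (x + 0 *\<^sub>R axis j 1) - F (x + 0 *\<^sub>R axis j 1) * (x$j / norm x)) /
        (norm (x + 0 *\<^sub>R axis j 1) * norm (x + 0 *\<^sub>R axis j 1))) (at 0)"
      by (rule DERIV_divide[OF dF dn]) (use x in simp)
    then have d: "((\<lambda>s. F (x + s *\<^sub>R axis j 1) / norm (x + s *\<^sub>R axis j 1)) has_field_derivative
        (pd F j x / norm x - F x * x$j / norm x ^ 3)) (at 0)"
      using x by (simp add: field_simps power3_eq_cube)
    define S where "S = (\<lambda>s. x + s *\<^sub>R axis j (1::real)) -` (U - {0})"
    have oS: "open S" unfolding S_def
      by (rule continuous_open_vimage) (auto intro!: continuous_intros simp: oU)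
    have "0 \<in> S" using x by (simp add: S_def)
    have "((\<lambda>s. phiK \<Omega> phiM phiS (x + s *\<^sub>R axis j 1)) has_field_derivative
        (pd F j x / norm x - F x * x$j / norm x ^ 3)) (at 0)"
      by (rule has_field_derivative_transform_within_open[OF d oS \<open>0 \<in> S\<close>])
         (auto simp: S_def phiK_eq)
    then show ?thesis unfolding pd_def by (rule DERIV_imp_deriv)
  qed
  define cdet where "cdet x = -4 * (1 / sqrt \<bar>det (\<gamma> x)\<bar>)" for x
  have rc: "ra cdet U" unfolding cdet_def
    by (rule ra_mult[OF ra_const ra_inv_sqrt_abs[OF ra_det[OF gam] detnz]])
  define V where "V x = (\<chi> j. phiS x * pd F j x - F x * pd phiS j x)" for x
  define H1 where "H1 x = cdet x *\<^sub>R (matrix_inv (\<gamma> x) *v J1 phiM phiS x)" for x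
  define H2 where "H2 x = (- cdet x) *\<^sub>R (matrix_inv (\<gamma> x) *v V x)" for x
  define H where "H x = cdet x * phiS x * F x" for x
  have rJ1: "ra (\<lambda>x. J1 phiM phiS x $ i) U" for i
    unfolding J1_def by (simp, intro ra_diff ra_mult rS rM ra_pd(1))
  have rV: "ra (\<lambda>x. V x $ i) U" for i
    unfolding V_def by (simp, intro ra_diff ra_mult rS rF ra_pd(1))
  have rH1: "ra (\<lambda>x. H1 x $ i) U" for i
    unfolding H1_def by (simp, rule ra_mult[OF rc ra_matinv_apply[OF gam detnz rJ1 oU]])
  have rH2: "ra (\<lambda>x. H2 x $ i) U" for i
  proof -
    have e: "(\<lambda>x. H2 x $ i) = (\<lambda>x. - (cdet x * (matrix_inv (\<gamma> x) *v V x) $ i))"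
      unfolding H2_def by simp
    show ?thesis unfolding e by (rule ra_minus[OF ra_mult[OF rc ra_matinv_apply[OF gam detnz rV oU]]])
  qed
  have rH: "ra H U" unfolding H_def by (intro ra_mult rc rS rF)
  have eq: "Jvec \<gamma> \<Omega> phiM phiS x = H1 x + (1 / norm x ^ 3) *\<^sub>R ((norm x)\<^sup>2 *\<^sub>R H2 x + H x *\<^sub>R x)"
    if x: "x \<in> U" "x \<noteq> 0" for x
  proof -
    define r where "r = norm x"
    have r: "r > 0" using x by (simp add: r_def)
    define A where "A = matrix_inv (\<gamma> x)"
    have inv: "invertible (\<gamma> x)" using detnz[OF x(1)] invertible_det_nz by blast
    have Ax: "A *v x = x"
    proof -
      have "A *v (\<gamma> x *v x) = x"
        by (simp add: A_def matrix_vector_mul_assoc invertible_matrix_inv[OF inv])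
      then show ?thesis using normal_gauss x(1) by (simp add: U_def)
    qed
    have J3: "J3 \<Omega> phiM phiS x = (1/r) *\<^sub>R V x - (phiS x * F x / r^3) *\<^sub>R x"
      unfolding J3_def V_def vec_eq_iff
      using r by (simp add: dphiK[OF x] phiK_eq[OF x(1)] r_def[symmetric] field_simps)
    have "Jvec \<gamma> \<Omega> phiM phiS x = cdet x *\<^sub>R (A *v (J1 phiM phiS x - ((1/r) *\<^sub>R V x - (phiS x * F x / r^3) *\<^sub>R x)))"
      unfolding Jvec_def J3 cdet_def A_def by simp
    also have "\<dots> = cdet x *\<^sub>R (A *v J1 phiM phiS x) - (cdet x / r) *\<^sub>R (A *v V x) + (cdet x * phiS x * F x / r^3) *\<^sub>R x"
      by (simp add: matrix_vector_mult_diff_distrib matrix_vector_right_distrib matrix_vector_mult_scaleR Ax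
           scaleR_diff_right scaleR_add_right)
    also have "\<dots> = H1 x + (1 / r ^ 3) *\<^sub>R (r\<^sup>2 *\<^sub>R H2 x + H x *\<^sub>R x)"
      unfolding H1_def H2_def H_def A_def[symmetric] vec_eq_iff
      using r by (simp add: field_simps power2_eq_square power3_eq_cube)
    finally show ?thesis by (simp add: r_def)
  qed
  show ?thesis
    by (rule exI[of _ \<rho>], rule conjI[OF rho_pos], rule exI[of _ H1], rule exI[of _ H2], rule exI[of _ H])
       (use rH1 rH2 rH eq in \<open>simp add: U_def\<close>)
qed

end
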